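(* For $a,b\ge0$ let $p_k(a,b)=\mathbb{P}(X-Y=k)$, $k\in\mathbb{Z}$, for independent $X\sim\mathrm{Poi}_a$, $Y\sim\mathrm{Poi}_b$. Then for all $a,b\ge0$ and all $N\ge1$, \[ \sum_{k\in\mathbb{Z}:\,|k|\ge\sqrt N}\sqrt{p_k(a,b)\,p_{-k}(a,b)}\le\frac{2\sqrt{ab}}{N}. \]
   Context: $\mathrm{Poi}_\lambda$ is the Poisson distribution with parameter $\lambda$, with $\mathrm{Poi}_0$ the point mass at $0$. *)

theory Defs
  imports "HOL-Analysis.Analysis"
begin

text \<open>Probability mass function of the Poisson distribution with parameter \<open>l \<ge> 0\<close>;
  for \<open>l = 0\<close> this is the point mass at 0 (since \<open>0 ^ 0 = 1\<close>).\<close>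
definition poi :: "real \<Rightarrow> nat \<Rightarrow> real" where
  "poi l n = l ^ n / fact n * exp (- l)"

definition pdiff :: "real \<Rightarrow> real \<Rightarrow> int \<Rightarrow> real" where
  "pdiff a b k = (\<Sum>\<^sub>\<infinity>(x, y) \<in> {(x::nat, y::nat). int x - int y = k}. poi a x * poi b y)"

end

theory Submission
  imports Defs
begin


lemma poi_nonneg: "l \<ge> 0 \<Longrightarrow> poi l n \<ge> 0"
  by (simp add: poi_def)

lemma poi_Suc: "real (Suc n) * poi l (Suc n) = l * poi l n"
proof -
  have "fact (Suc n) = (real (Suc n)) * (fact n :: real)" by (simp add: fact_Suc)
  moreover have "(fact n :: real) \<noteq> 0" by simp
  ultimately show ?thesis unfolding poi_def by (simp add: field_simps del: of_nat_Suc)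
qed

lemma poi_sums: "poi l sums 1"
proof -
  have "(\<lambda>n. l^n /\<^sub>R fact n * exp (-l)) sums (exp l * exp (-l))"
    by (rule sums_mult2[OF exp_converges])
  moreover have "poi l = (\<lambda>n. l^n /\<^sub>R fact n * exp (-l))"
    by (auto simp: poi_def fun_eq_iff scaleR_conv_of_real divide_inverse)
  moreover have "exp l * exp (-l) = 1" by (simp add: exp_minus)
  ultimately show ?thesis by simp
qed

lemma poi_m1_sums: "(\<lambda>n. real n * poi l n) sums l"
proof -
  have "(\<lambda>n. real (Suc n) * poi l (Suc n)) sums (l * 1)"
    unfolding poi_Suc by (rule sums_mult[OF poi_sums])
  thus ?thesis by (subst (asm) sums_Suc_iff) simp
qed

lemma poi_m2_sums: "(\<lambda>n. real n ^ 2 * poi l n) sums (l^2 + l)"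
proof -
  have "(\<lambda>n. l * (real n * poi l n + poi l n)) sums (l * (l + 1))"
    by (rule sums_mult[OF sums_add[OF poi_m1_sums poi_sums]])
  moreover have "real (Suc n) ^ 2 * poi l (Suc n) = l * (real n * poi l n + poi l n)" for n
  proof -
    have "real (Suc n) ^ 2 * poi l (Suc n) = real (Suc n) * (real (Suc n) * poi l (Suc n))"
      by (simp add: power2_eq_square)
    also have "\<dots> = l * (real n * poi l n + poi l n)" unfolding poi_Suc by (simp add: algebra_simps)
    finally show ?thesis .
  qed
  ultimately have "(\<lambda>n. real (Suc n) ^ 2 * poi l (Suc n)) sums (l^2 + l)"
    by (simp add: power2_eq_square algebra_simps)
  thus ?thesis by (subst (asm) sums_Suc_iff) simp
qed

lemma poi_hs: "l \<ge> 0 \<Longrightarrow> (poi l has_sum 1) UNIV"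
  by (rule sums_nonneg_imp_has_sum[OF poi_sums poi_nonneg])
lemma poi_m1_hs: "l \<ge> 0 \<Longrightarrow> ((\<lambda>n. real n * poi l n) has_sum l) UNIV"
  by (rule sums_nonneg_imp_has_sum[OF poi_m1_sums]) (simp add: poi_nonneg)
lemma poi_m2_hs: "l \<ge> 0 \<Longrightarrow> ((\<lambda>n. real n ^ 2 * poi l n) has_sum (l^2 + l)) UNIV"
  by (rule sums_nonneg_imp_has_sum[OF poi_m2_sums]) (simp add: poi_nonneg)



lemma inner_hs:
  assumes "l \<ge> 0"
  shows "((\<lambda>y. (real x - real y)^2 * (poi l x * poi l y)) has_sum
           (poi l x * ((real x)^2 + (-2 * real x) * l + (l^2 + l)))) UNIV"
proof -
  have h: "((\<lambda>y. (real x)^2 * poi l y + (-2 * real x) * (real y * poi l y) + real y ^ 2 * poi l y)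
     has_sum ((real x)^2 * 1 + (-2 * real x) * l + (l^2 + l))) UNIV"
    by (intro has_sum_add has_sum_cmult_right poi_hs poi_m1_hs poi_m2_hs assms)
  have "((\<lambda>y. poi l x * ((real x)^2 * poi l y + (-2 * real x) * (real y * poi l y) + real y ^ 2 * poi l y))
     has_sum (poi l x * ((real x)^2 * 1 + (-2 * real x) * l + (l^2 + l)))) UNIV"
    by (rule has_sum_cmult_right[OF h])
  thus ?thesis by (simp add: power2_eq_square algebra_simps)
qed

lemma outer_hs:
  assumes "l \<ge> 0"
  shows "((\<lambda>x. poi l x * ((real x)^2 + (-2 * real x) * l + (l^2 + l))) has_sum (2 * l)) UNIV"
proof -
  have "((\<lambda>x. real x ^ 2 * poi l x + (-2 * l) * (real x * poi l x) + (l^2 + l) * poi l x)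
     has_sum ((l^2 + l) + (-2 * l) * l + (l^2 + l) * 1)) UNIV"
    by (intro has_sum_add has_sum_cmult_right poi_hs poi_m1_hs poi_m2_hs assms)
  thus ?thesis by (simp add: power2_eq_square algebra_simps)
qed

lemma m2_pairs:
  assumes "l \<ge> 0"
  shows "((\<lambda>(x,y). (real x - real y)^2 * (poi l x * poi l y)) has_sum (2 * l)) UNIV"
proof -
  have s: "(\<lambda>(x,y). (real x - real y)^2 * (poi l x * poi l y)) summable_on Sigma UNIV (\<lambda>_. UNIV)"
    using inner_hs[OF assms] outer_hs[OF assms]
    by (intro summable_on_SigmaI[where g="\<lambda>x. poi l x * ((real x)^2 + (-2 * real x) * l + (l^2 + l))"])
       (auto simp: poi_nonneg assms has_sum_imp_summable)
  have "((\<lambda>(x,y). (real x - real y)^2 * (poi l x * poi l y)) has_sum (2 * l)) (Sigma UNIV (\<lambda>_. UNIV))"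
    by (rule has_sum_SigmaI[OF _ outer_hs[OF assms] s]) (use inner_hs[OF assms] in simp)
  thus ?thesis by simp
qed

lemma pairs_summable:
  assumes "l \<ge> 0" "m \<ge> 0"
  shows "(\<lambda>(x,y). poi l x * poi m y) summable_on UNIV"
proof -
  have "(\<lambda>(x,y). poi l x * poi m y) summable_on Sigma UNIV (\<lambda>_. UNIV)"
  proof (rule summable_on_SigmaI[where g="\<lambda>x. poi l x * 1"])
    show "((\<lambda>y. case (x, y) of (x, y) \<Rightarrow> poi l x * poi m y) has_sum poi l x * 1) UNIV" for x
      using has_sum_cmult_right[OF poi_hs[OF assms(2)], of "poi l x"] by simp
    show "(\<lambda>x. poi l x * 1) summable_on UNIV"
      using poi_hs[OF assms(1)] has_sum_imp_summable by simp
  qed (auto simp: poi_nonneg assms)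
  thus ?thesis by simp
qed



lemma cheb:
  fixes l :: real and N :: nat
  assumes l: "l \<ge> 0" and N: "N \<ge> 1"
  shows "(\<Sum>\<^sub>\<infinity>k \<in> {k::int. real_of_int \<bar>k\<bar> \<ge> sqrt (real N)}. pdiff l l k) \<le> 2 * l / real N"
proof -
  define A where "A = {k::int. real_of_int \<bar>k\<bar> \<ge> sqrt (real N)}"
  define F where "F = (\<lambda>k::int. {(x::nat, y::nat). int x - int y = k})"
  define f where "f = (\<lambda>(x::nat,y::nat). poi l x * poi l y)"
  define B where "B = {(x::nat,y::nat). real_of_int \<bar>int x - int y\<bar> \<ge> sqrt (real N)}"
  define d where "d = (\<lambda>(x::nat,y::nat). (real x - real y)^2 * (poi l x * poi l y))"
  have fsum: "f summable_on UNIV" unfolding f_def by (rule pairs_summable[OF l l])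
  have fB: "f summable_on B" by (rule summable_on_subset_banach[OF fsum]) simp
  have inj: "inj_on snd (Sigma A F)" by (auto simp: inj_on_def F_def)
  have img: "snd ` Sigma A F = B"
  proof
    show "snd ` Sigma A F \<subseteq> B" by (auto simp: A_def F_def B_def)
    show "B \<subseteq> snd ` Sigma A F"
    proof
      fix p assume "p \<in> B"
      then obtain x y where p: "p = (x,y)" and "real_of_int \<bar>int x - int y\<bar> \<ge> sqrt (real N)"
        by (auto simp: B_def)
      hence "(int x - int y, p) \<in> Sigma A F" by (auto simp: A_def F_def)
      thus "p \<in> snd ` Sigma A F" by force
    qed
  qed
  have gsum: "(f \<circ> snd) summable_on Sigma A F"
    using fB summable_on_reindex[OF inj, of f] img by simp
  have "(\<Sum>\<^sub>\<infinity>k\<in>A. pdiff l l k) = (\<Sum>\<^sub>\<infinity>k\<in>A. \<Sum>\<^sub>\<infinity>p\<in>F k. (f \<circ> snd) (k, p))"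
    by (simp add: pdiff_def F_def f_def)
  also have "\<dots> = infsum (f \<circ> snd) (Sigma A F)"
    by (rule infsum_Sigma_banach[OF gsum])
  also have "\<dots> = infsum f B"
    using infsum_reindex[OF inj, of f] img by simp
  also have "\<dots> \<le> (\<Sum>\<^sub>\<infinity>p\<in>B. d p / real N)"
  proof (rule infsum_mono[OF fB])
    have dh: "(d has_sum (2 * l)) UNIV" unfolding d_def by (rule m2_pairs[OF l])
    have "(\<lambda>p. d p * inverse (real N)) summable_on UNIV"
      by (rule summable_on_cmult_left) (use dh has_sum_imp_summable in blast)
    hence "(\<lambda>p. d p / real N) summable_on UNIV" by (simp add: divide_inverse)
    thus "(\<lambda>p. d p / real N) summable_on B"
      by (rule summable_on_subset_banach) simp
    fix p assume "p \<in> B"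
    then obtain x y where p: "p = (x,y)" and h: "real_of_int \<bar>int x - int y\<bar> \<ge> sqrt (real N)"
      by (auto simp: B_def)
    have "sqrt (real N) ^ 2 \<le> (real_of_int \<bar>int x - int y\<bar>) ^ 2"
      by (rule power_mono[OF h]) simp
    hence "real N \<le> (real x - real y)^2" by simp
    moreover have "poi l x * poi l y \<ge> 0" by (simp add: poi_nonneg l)
    ultimately have "real N * (poi l x * poi l y) \<le> (real x - real y)^2 * (poi l x * poi l y)"
      by (rule mult_right_mono)
    moreover have "real N > 0" using N by simp
    ultimately show "f p \<le> d p / real N" by (simp add: p f_def d_def field_simps)
  qed
  also have "\<dots> \<le> (\<Sum>\<^sub>\<infinity>p. d p / real N)"
  proof (rule infsum_mono2)
    have dh: "(d has_sum (2 * l)) UNIV" unfolding d_def by (rule m2_pairs[OF l])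
    have "(\<lambda>p. d p * inverse (real N)) summable_on UNIV"
      by (rule summable_on_cmult_left) (use dh has_sum_imp_summable in blast)
    thus "(\<lambda>p. d p / real N) summable_on UNIV" by (simp add: divide_inverse)
    thus "(\<lambda>p. d p / real N) summable_on B"
      by (rule summable_on_subset_banach) simp
    show "B \<subseteq> UNIV" by simp
    fix p :: "nat \<times> nat"
    show "0 \<le> d p / real N" by (cases p) (simp add: d_def poi_nonneg l)
  qed
  also have "\<dots> = 2 * l / real N"
  proof -
    have dh: "(d has_sum (2 * l)) UNIV" unfolding d_def by (rule m2_pairs[OF l])
    have "((\<lambda>p. d p * inverse (real N)) has_sum (2 * l * inverse (real N))) UNIV"
      by (rule has_sum_cmult_left[OF dh])
    thus ?thesis by (simp add: divide_inverse infsumI)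
  qed
  finally show ?thesis by (simp add: A_def)
qed



definition SS :: "real \<Rightarrow> nat \<Rightarrow> real" where
  "SS p n = (\<Sum>\<^sub>\<infinity>y. p ^ y / (fact (y + n) * fact y))"

lemma SS_nonneg: "p \<ge> 0 \<Longrightarrow> SS p n \<ge> 0"
  unfolding SS_def by (rule infsum_nonneg) simp

lemma pdiff_pos: "pdiff l m (int n) = exp (-(l+m)) * l ^ n * SS (l*m) n"
proof -
  have set: "{(x::nat, y::nat). int x - int y = int n} = (\<lambda>y. (y+n, y)) ` UNIV"
    by (auto simp: image_def)
  have inj: "inj_on (\<lambda>y::nat. (y+n, y)) UNIV" by (auto simp: inj_on_def)
  have "pdiff l m (int n) = (\<Sum>\<^sub>\<infinity>y. poi l (y+n) * poi m y)"
    unfolding pdiff_def set by (subst infsum_reindex[OF inj]) (simp add: o_def)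
  also have "\<dots> = (\<Sum>\<^sub>\<infinity>y. (exp (-(l+m)) * l ^ n) * ((l*m) ^ y / (fact (y + n) * fact y)))"
    by (rule infsum_cong) (simp add: poi_def power_add power_mult_distrib exp_add[symmetric] field_simps)
  also have "\<dots> = exp (-(l+m)) * l ^ n * SS (l*m) n"
    unfolding SS_def by (rule infsum_cmult_right')
  finally show ?thesis .
qed

lemma pdiff_neg: "pdiff l m (- int n) = exp (-(l+m)) * m ^ n * SS (l*m) n"
proof -
  have set: "{(x::nat, y::nat). int x - int y = - int n} = (\<lambda>x. (x, x+n)) ` UNIV"
    by (auto simp: image_def)
  have inj: "inj_on (\<lambda>x::nat. (x, x+n)) UNIV" by (auto simp: inj_on_def)
  have "pdiff l m (- int n) = (\<Sum>\<^sub>\<infinity>x. poi l x * poi m (x+n))"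
    unfolding pdiff_def set by (subst infsum_reindex[OF inj]) (simp add: o_def)
  also have "\<dots> = (\<Sum>\<^sub>\<infinity>y. (exp (-(l+m)) * m ^ n) * ((l*m) ^ y / (fact (y + n) * fact y)))"
    by (rule infsum_cong) (simp add: poi_def power_add power_mult_distrib exp_add[symmetric] field_simps)
  also have "\<dots> = exp (-(l+m)) * m ^ n * SS (l*m) n"
    unfolding SS_def by (rule infsum_cmult_right')
  finally show ?thesis .
qed

lemma q_eq:
  assumes a: "a \<ge> 0" and b: "b \<ge> 0"
  shows "sqrt (pdiff a b k * pdiff a b (- k)) =
         exp (2 * sqrt (a*b) - (a+b)) * pdiff (sqrt (a*b)) (sqrt (a*b)) k"
proof -
  define c where "c = sqrt (a*b)"
  have cc: "c * c = a * b" using a b by (simp add: c_def)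
  have c0: "c \<ge> 0" using a b by (simp add: c_def)
  have Sn: "SS (a*b) n \<ge> 0" for n using a b by (simp add: SS_nonneg)
  have key: "sqrt (exp (-(a+b)) * a ^ n * SS (a*b) n * (exp (-(a+b)) * b ^ n * SS (a*b) n))
      = exp (2 * c - (a+b)) * (exp (-(c+c)) * c ^ n * SS (a*b) n)" for n
  proof -
    define E where "E = exp (-(a+b))"
    define S where "S = SS (a*b) n"
    have cn: "c^n * c^n = a^n * b^n"
      by (simp add: power_mult_distrib[symmetric] cc)
    have "E * a ^ n * S * (E * b ^ n * S) = (E * S * c ^ n)^2"
      by (simp add: power2_eq_square mult_ac cn)
    hence "sqrt (E * a ^ n * S * (E * b ^ n * S)) = E * S * c ^ n"
      using Sn[of n] c0 by (simp add: E_def S_def)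
    also have "exp (2 * c - (a+b)) * exp (-(c+c)) = E"
      unfolding E_def exp_add[symmetric] by simp
    hence "E * S * c ^ n = exp (2 * c - (a+b)) * (exp (-(c+c)) * c ^ n * S)"
      by (simp add: mult_ac)
    finally show ?thesis by (simp add: E_def S_def)
  qed
  show ?thesis
  proof (cases "k \<ge> 0")
    case True
    then obtain n where k: "k = int n" using nonneg_int_cases by blast
    show ?thesis unfolding k pdiff_pos pdiff_neg c_def[symmetric] cc using key by simp
  next
    case False
    then obtain n where k: "k = - int n" by (metis minus_minus neg_0_le_iff_le nle_le nonneg_int_cases)
    show ?thesis unfolding k pdiff_pos pdiff_neg c_def[symmetric] cc minus_minus using key
      by (simp add: mult.commute)
  qed
qed

theorem lemma2:
  fixes a b :: real and N :: nat
  assumes "a \<ge> 0" and "b \<ge> 0" and "N \<ge> 1"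
  shows "(\<Sum>\<^sub>\<infinity>k \<in> {k::int. real_of_int \<bar>k\<bar> \<ge> sqrt (real N)}.
            sqrt (pdiff a b k * pdiff a b (- k))) \<le> 2 * sqrt (a * b) / real N"
proof -
  define c where "c = sqrt (a*b)"
  define A where "A = {k::int. real_of_int \<bar>k\<bar> \<ge> sqrt (real N)}"
  have c0: "c \<ge> 0" using assms by (simp add: c_def)
  have "2 * c \<le> a + b"
  proof -
    have "0 \<le> (sqrt a - sqrt b)^2" by simp
    moreover have "c = sqrt a * sqrt b" by (simp add: c_def real_sqrt_mult)
    ultimately show ?thesis using assms by (simp add: power2_eq_square algebra_simps)
  qed
  hence e1: "exp (2 * c - (a+b)) \<le> 1" by simp
  have pnn: "infsum (pdiff c c) A \<ge> 0"
    by (rule infsum_nonneg) (auto simp: pdiff_def poi_nonneg c0 intro!: infsum_nonneg mult_nonneg_nonneg)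
  have "(\<Sum>\<^sub>\<infinity>k\<in>A. sqrt (pdiff a b k * pdiff a b (- k))) = (\<Sum>\<^sub>\<infinity>k\<in>A. exp (2 * c - (a+b)) * pdiff c c k)"
    using q_eq[OF assms(1,2)] by (simp add: c_def)
  also have "\<dots> = exp (2 * c - (a+b)) * infsum (pdiff c c) A"
    by (rule infsum_cmult_right')
  also have "\<dots> \<le> 1 * infsum (pdiff c c) A"
    by (rule mult_right_mono[OF e1 pnn])
  also have "\<dots> \<le> 2 * c / real N" using cheb[OF c0 assms(3)] by (simp add: A_def)
  finally show ?thesis by (simp add: A_def c_def)
qed

end
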